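(* Let $n\geq2$ be an integer, let $\alpha\geq5$, and let $f:\mathbb{R}^n\to[0,\infty)$ be a log-concave function with $\int f=1$. Denote $K=\{x\in\mathbb{R}^n: f(x)\geq e^{-\alpha n}f(0)\}$. Then $$ \int_Kf(x)\,dx\geq1-e^{-\alpha n/8}. $$
   Context: A function $f\geq0$ is log-concave if $f(\lambda x+(1-\lambda)y)\geq f(x)^\lambda f(y)^{1-\lambda}$ for all $x,y$ and $0<\lambda<1$. *)

theory Defs
  imports "HOL-Analysis.Analysis"
begin

definition log_concave :: "('a::real_vector \<Rightarrow> real) \<Rightarrow> bool" where
  "log_concave f \<longleftrightarrow> (\<forall>x. f x \<ge> 0) \<and>
     (\<forall>x y l. 0 < l \<and> l < 1 \<longrightarrow>
        f (l *\<^sub>R x + (1 - l) *\<^sub>R y) \<ge> f x powr l * f y powr (1 - l))"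

end

theory Submission
  imports Defs
begin

lemma has_integral_scale_UNIV:
  fixes f :: "'a::euclidean_space \<Rightarrow> real"
  assumes f: "(f has_integral i) UNIV" and m: "m > 0"
  shows "((\<lambda>x. f (m *\<^sub>R x)) has_integral (i / m ^ DIM('a))) UNIV"
proof -
  have box: "((\<lambda>x. f (m *\<^sub>R x)) has_integral (integral (cbox (m *\<^sub>R a) (m *\<^sub>R b)) f / m ^ DIM('a))) (cbox a b)" for a b
  proof -
    have "f integrable_on cbox (m *\<^sub>R a) (m *\<^sub>R b)"
      using f has_integral_integrable integrable_on_subcbox by blast
    then have "(f has_integral integral (cbox (m *\<^sub>R a) (m *\<^sub>R b)) f) (cbox (m *\<^sub>R a) (m *\<^sub>R b))"
      by (rule integrable_integral)
    from has_integral_affinity'[OF this m, of 0] m show ?thesis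
      by (simp add: divide_inverse_commute)
  qed
  show ?thesis
    unfolding has_integral_alt'
  proof (intro conjI allI impI)
    fix a b show "(\<lambda>x. if x \<in> UNIV then f (m *\<^sub>R x) else 0) integrable_on cbox a b"
      using box by auto
  next
    fix e :: real assume e: "e > 0"
    have "e * m ^ DIM('a) > 0" using e m by simp
    with f obtain B where B: "B > 0" and
      HB: "\<And>a b. ball 0 B \<subseteq> cbox a b \<Longrightarrow> norm (integral (cbox a b) f - i) < e * m ^ DIM('a)"
      unfolding has_integral_alt' by force
    show "\<exists>B>0. \<forall>a b. ball 0 B \<subseteq> cbox a b \<longrightarrow>
            norm (integral (cbox a b) (\<lambda>x. if x \<in> UNIV then f (m *\<^sub>R x) else 0) - i / m ^ DIM('a)) < e"
    proof (intro exI[of _ "B / m"] conjI allI impI)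
      show "B / m > 0" using B m by simp
      fix a b :: 'a assume sub: "ball 0 (B / m) \<subseteq> cbox a b"
      have "ball 0 B \<subseteq> cbox (m *\<^sub>R a) (m *\<^sub>R b)"
      proof
        fix y :: 'a assume "y \<in> ball 0 B"
        then have "y /\<^sub>R m \<in> ball 0 (B / m)" using m by (simp add: field_simps)
        then have "y /\<^sub>R m \<in> cbox a b" using sub by blast
        then show "y \<in> cbox (m *\<^sub>R a) (m *\<^sub>R b)" using m
          by (auto simp: mem_box field_simps inner_simps)
      qed
      then have "norm (integral (cbox (m *\<^sub>R a) (m *\<^sub>R b)) f - i) < e * m ^ DIM('a)" by (rule HB)
      moreover have "integral (cbox a b) (\<lambda>x. if x \<in> UNIV then f (m *\<^sub>R x) else 0) = integral (cbox (m *\<^sub>R a) (m *\<^sub>R b)) f / m ^ DIM('a)"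
        using box[of a b] by (simp add: integral_unique)
      ultimately show "norm (integral (cbox a b) (\<lambda>x. if x \<in> UNIV then f (m *\<^sub>R x) else 0) - i / m ^ DIM('a)) < e"
        using m by (simp add: diff_divide_distrib[symmetric] abs_divide pos_divide_less_eq)
    qed
  qed
qed

theorem corollary5p3:
  fixes f :: "real ^ 'n \<Rightarrow> real" and \<alpha> :: real
  assumes "CARD('n) \<ge> 2"
    and "\<alpha> \<ge> 5"
    and "\<And>x. f x \<ge> 0"
    and "log_concave f"
    and "(f has_integral 1) UNIV"
  shows "integral {x. f x \<ge> exp (- \<alpha> * real CARD('n)) * f 0} f
           \<ge> 1 - exp (- \<alpha> * real CARD('n) / 8)"
proof -
  note nonneg = assms(3)
  note fint = assms(5)
  define N where "N = real CARD('n)"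
  have N: "N \<ge> 2" using assms(1) unfolding N_def by simp
  define c where "c = exp (- \<alpha> * N) * f 0"
  define K where "K = {x. f x \<ge> c}"
  define gK where "gK = (\<lambda>x. if x \<in> K then f x else 0)"
  have fmeas: "f \<in> borel_measurable lebesgue"
    using integrable_imp_measurable[of f UNIV] fint lebesgue_on_UNIV_eq by (metis has_integral_integrable)
  note [measurable] = fmeas
  have gKmeas: "gK \<in> borel_measurable lebesgue"
    unfolding gK_def K_def by measurable
  have gKint: "gK integrable_on UNIV"
    apply (rule measurable_bounded_by_integrable_imp_integrable[where g=f])
    using gKmeas fint nonneg by (auto simp: gK_def lebesgue_on_UNIV_eq has_integral_integrable)
  define I where "I = integral K f"
  have "integral UNIV gK = I"
    unfolding gK_def I_def by (rule integral_restrict_UNIV)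
  with gKint have gKI: "(gK has_integral I) UNIV" by (metis integrable_integral)
  define gA where "gA = (\<lambda>x. f x - gK x)"
  have gAI: "(gA has_integral (1 - I)) UNIV"
    unfolding gA_def using has_integral_diff[OF fint gKI] .
  have half: "((\<lambda>x. f ((1/2) *\<^sub>R x)) has_integral (2 ^ CARD('n))) UNIV"
    using has_integral_scale_UNIV[OF fint, of "1/2"] by (simp add: power_divide)
  have pt: "exp (\<alpha> * N / 2) * gA x \<le> f ((1/2) *\<^sub>R x)" for x
  proof (cases "x \<in> K")
    case True
    then show ?thesis using nonneg by (simp add: gA_def gK_def)
  next
    case False
    then have gAx: "gA x = f x" and lt: "f x < c" by (auto simp: gA_def gK_def K_def)
    show ?thesis
    proof (cases "f x = 0")
      case True then show ?thesis using gAx nonneg by simp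
    next
      case False
      then have fx: "f x > 0" using nonneg[of x] by simp
      have f0: "exp (\<alpha> * N) * f x \<le> f 0"
        using lt unfolding c_def by (simp add: exp_minus field_simps)
      have "\<forall>x y l. 0 < l \<and> l < 1 \<longrightarrow> f (l *\<^sub>R x + (1 - l) *\<^sub>R y) \<ge> f x powr l * f y powr (1 - l)"
        using assms(4) unfolding log_concave_def by blast
      from this[rule_format, of "1/2" x 0]
      have lc0: "f ((1/2) *\<^sub>R x + (1 - 1/2) *\<^sub>R 0) \<ge> f x powr (1/2) * f 0 powr (1 - 1/2)" by simp
      then have lc: "f ((1/2) *\<^sub>R x) \<ge> f x powr (1/2) * f 0 powr (1/2)" by simp
      have "(exp (\<alpha> * N) * f x) powr (1/2) \<le> f 0 powr (1/2)"
        using f0 fx by (intro powr_mono2) auto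
      moreover have "(exp (\<alpha> * N) * f x) powr (1/2) = exp (\<alpha> * N / 2) * f x powr (1/2)"
        using fx by (simp add: powr_mult exp_powr_real)
      ultimately have "exp (\<alpha> * N / 2) * f x powr (1/2) * f x powr (1/2) \<le> f x powr (1/2) * f 0 powr (1/2)"
        using fx by (simp add: mult.commute mult_left_mono)
      moreover have "f x powr (1/2) * f x powr (1/2) = f x"
        using fx by (simp add: powr_add[symmetric])
      ultimately show ?thesis using lc gAx by (simp add: mult.assoc)
    qed
  qed
  have "((\<lambda>x. exp (\<alpha> * N / 2) * gA x) has_integral (exp (\<alpha> * N / 2) * (1 - I))) UNIV"
    using has_integral_mult_right[OF gAI] .
  from has_integral_le[OF this half pt]
  have le1: "exp (\<alpha> * N / 2) * (1 - I) \<le> 2 ^ CARD('n)" .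
  have two: "(2::real) ^ CARD('n) = exp (N * ln 2)"
    unfolding N_def by (simp add: exp_of_nat_mult)
  have "1 - I \<le> exp (N * ln 2) * exp (- (\<alpha> * N / 2))"
    using le1 two by (simp add: exp_minus field_simps)
  also have "\<dots> = exp (N * ln 2 - \<alpha> * N / 2)" by (simp add: exp_add[symmetric])
  also have "\<dots> \<le> exp (- \<alpha> * N / 8)"
  proof -
    have "ln (2::real) < 1" using ln_2_less_1 .
    then have "N * ln 2 \<le> N * 1" using N by (intro mult_left_mono) auto
    moreover have "\<alpha> * N \<ge> 5 * N" using assms(2) N by (intro mult_right_mono) auto
    moreover have "- \<alpha> * N = -(\<alpha> * N)" by simp
    ultimately have "N * ln 2 - \<alpha> * N / 2 \<le> - \<alpha> * N / 8" using N by linarith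
    then show ?thesis by simp
  qed
  finally show ?thesis unfolding I_def K_def c_def N_def by simp
qed
end
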